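(* Let $G=(V,E)$ be a simple graph with $n\ge 2$ vertices and $|E|=2n-3$. Let $e\in E$, and let $G^*$ be the multigraph obtained from $G$ by adding a parallel copy $e_{add}$ of $e$. Suppose the edge set of $G^*$ is partitioned into two edge-disjoint spanning trees $T^r$ (red) and $T^b$ (black) with $e_{add}\in T^b$. Run the decomposition procedure on $(G^*,T^r,T^b)$. Then $G$ is a Laman graph if and only if every edge of $G^*$ is deleted by the time the procedure terminates.
   Context: A graph $G$ with $n$ vertices and $m$ edges is a Laman graph if $m=2n-3$ and, for every $k\ge 2$, every set of $k$ vertices induces at most $2k-3$ edges. Each edge of $G^*$ carries the color of the tree containing it. Decomposition procedure. Step 1 deletes $e_{add}$. For $i=2,3,\dots$, let $c_i$ be red if $i$ is even and black if $i$ is odd, and let $\bar c_i$ be the other color. Let $F$ be the set of not-yet-deleted edges of color $\bar c_i$. Step $i$ deletes, simultaneously, every not-yet-deleted edge of color $c_i$ whose two endpoints lie in different connected components of the graph $(V,F)$. The procedure terminates at the first step $i\ge 2$ in which no edge is deleted. *)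

theory Defs
  imports Main
begin

(* A multigraph is given by a set of edge identifiers Es and an endpoint map ends. *)

definition adj_rel :: "('e \<Rightarrow> 'a set) \<Rightarrow> 'e set \<Rightarrow> ('a \<times> 'a) set" where
  "adj_rel ends F = {(u, v). \<exists>f\<in>F. ends f = {u, v}}"

definition conn :: "('e \<Rightarrow> 'a set) \<Rightarrow> 'e set \<Rightarrow> 'a \<Rightarrow> 'a \<Rightarrow> bool" where
  "conn ends F u v \<longleftrightarrow> (u, v) \<in> (adj_rel ends F)\<^sup>*"

definition spanning_tree :: "'a set \<Rightarrow> ('e \<Rightarrow> 'a set) \<Rightarrow> 'e set \<Rightarrow> bool" where
  "spanning_tree V ends T \<longleftrightarrow>
     (\<forall>f\<in>T. ends f \<subseteq> V) \<and>
     (\<forall>u\<in>V. \<forall>v\<in>V. conn ends T u v) \<and>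
     (\<forall>f\<in>T. \<forall>u v. ends f = {u, v} \<longrightarrow> \<not> conn ends (T - {f}) u v)"

definition simple_graph :: "'a set \<Rightarrow> 'a set set \<Rightarrow> bool" where
  "simple_graph V E \<longleftrightarrow> finite V \<and> (\<forall>x\<in>E. \<exists>u v. u \<in> V \<and> v \<in> V \<and> u \<noteq> v \<and> x = {u, v})"

definition laman :: "'a set \<Rightarrow> 'a set set \<Rightarrow> bool" where
  "laman V E \<longleftrightarrow> card E = 2 * card V - 3 \<and>
     (\<forall>S \<subseteq> V. card S \<ge> 2 \<longrightarrow> card {x\<in>E. x \<subseteq> S} \<le> 2 * card S - 3)"

(* Step i \<ge> 2 of the decomposition procedure, given the set D of edges deleted so far.
   red f = True means f is red. c_i is red iff i is even; an edge f has colour c_i iff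
   red f = even i. *)
definition step_del :: "('e \<Rightarrow> 'a set) \<Rightarrow> 'e set \<Rightarrow> ('e \<Rightarrow> bool) \<Rightarrow> nat \<Rightarrow> 'e set \<Rightarrow> 'e set" where
  "step_del ends Es red i D =
     (let F = {g \<in> Es - D. red g \<noteq> even i}
      in {f \<in> Es - D. red f = even i \<and>
            (\<forall>u v. ends f = {u, v} \<longrightarrow> \<not> conn ends F u v)})"

fun deleted :: "('e \<Rightarrow> 'a set) \<Rightarrow> 'e set \<Rightarrow> ('e \<Rightarrow> bool) \<Rightarrow> 'e \<Rightarrow> nat \<Rightarrow> 'e set" where
  "deleted ends Es red eadd 0 = {}"
| "deleted ends Es red eadd (Suc 0) = {eadd}"
| "deleted ends Es red eadd (Suc (Suc k)) =
     deleted ends Es red eadd (Suc k) \<union> step_del ends Es red (Suc (Suc k)) (deleted ends Es red eadd (Suc k))"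

definition all_deleted_at_termination :: "('e \<Rightarrow> 'a set) \<Rightarrow> 'e set \<Rightarrow> ('e \<Rightarrow> bool) \<Rightarrow> 'e \<Rightarrow> bool" where
  "all_deleted_at_termination ends Es red eadd \<longleftrightarrow>
     (\<exists>k\<ge>2. step_del ends Es red k (deleted ends Es red eadd (k - 1)) = {} \<and>
            (\<forall>j. 2 \<le> j \<and> j < k \<longrightarrow> step_del ends Es red j (deleted ends Es red eadd (j - 1)) \<noteq> {}) \<and>
            deleted ends Es red eadd k = Es)"

end

theory Submission
  imports Defs
begin


lemma adj_sym: "(u,v) \<in> adj_rel en F \<Longrightarrow> (v,u) \<in> adj_rel en F"
  unfolding adj_rel_def by (auto simp: insert_commute)

lemma conn_refl[simp]: "conn en F u u" by (simp add: conn_def)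

lemma conn_trans: "conn en F u v \<Longrightarrow> conn en F v w \<Longrightarrow> conn en F u w"
  unfolding conn_def by (rule rtrancl_trans)

lemma conn_sym: "conn en F u v \<Longrightarrow> conn en F v u"
  unfolding conn_def
proof (induction rule: rtrancl_induct)
  case base then show ?case by simp
next
  case (step y z)
  then show ?case using adj_sym[OF step(2)] by (meson converse_rtrancl_into_rtrancl)
qed

lemma conn_mono: "F \<subseteq> F' \<Longrightarrow> conn en F u v \<Longrightarrow> conn en F' u v"
proof -
  assume a: "F \<subseteq> F'" "conn en F u v"
  have "adj_rel en F \<subseteq> adj_rel en F'" using a(1) unfolding adj_rel_def by auto
  then show ?thesis using a(2) unfolding conn_def using rtrancl_mono by blast
qed

lemma conn_edge: "f \<in> F \<Longrightarrow> en f = {u,v} \<Longrightarrow> conn en F u v"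
  unfolding conn_def adj_rel_def by (rule r_into_rtrancl) auto

lemma conn_empty: "conn en {} u v \<longleftrightarrow> u = v"
  unfolding conn_def adj_rel_def by simp

lemma conn_inside:
  assumes "\<forall>f\<in>F. en f \<subseteq> S" "conn en F u v" "u \<in> S" shows "v \<in> S"
  using assms(2,3) unfolding conn_def
proof (induction rule: rtrancl_induct)
  case base then show ?case by simp
next
  case (step y z)
  then obtain f where "f \<in> F" "en f = {y,z}" unfolding adj_rel_def by auto
  then show ?case using assms(1) by auto
qed

lemma conn_insert:
  assumes "en f = {a,b}"
  shows "conn en (insert f F) x y \<longleftrightarrow> conn en F x y \<or> (conn en F x a \<and> conn en F b y) \<or> (conn en F x b \<and> conn en F a y)"
proof
  assume "conn en F x y \<or> (conn en F x a \<and> conn en F b y) \<or> (conn en F x b \<and> conn en F a y)"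
  moreover have "conn en (insert f F) a b" "conn en (insert f F) b a"
    using assms by (auto intro: conn_edge simp: insert_commute)
  moreover have m: "\<And>u v. conn en F u v \<Longrightarrow> conn en (insert f F) u v" by (rule conn_mono) auto
  ultimately show "conn en (insert f F) x y" by (meson conn_trans)
next
  assume "conn en (insert f F) x y"
  then show "conn en F x y \<or> (conn en F x a \<and> conn en F b y) \<or> (conn en F x b \<and> conn en F a y)"
    unfolding conn_def[of en "insert f F"]
  proof (induction rule: rtrancl_induct)
    case base then show ?case by simp
  next
    case (step y z)
    then obtain g where g: "g \<in> insert f F" "en g = {y,z}" unfolding adj_rel_def by auto
    show ?case
    proof (cases "g \<in> F")
      case True
      then have "conn en F y z" using g conn_edge by metis
      then show ?thesis using step.IH conn_trans by metis
    next
      case False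
      then have "g = f" using g by auto
      then have "{y,z} = {a,b}" using g assms by simp
      then have "(y = a \<and> z = b) \<or> (y = b \<and> z = a)" by (auto simp: doubleton_eq_iff)
      then show ?thesis using step.IH conn_trans conn_sym conn_refl by metis
    qed
  qed
qed


definition comps :: "('e \<Rightarrow> 'a set) \<Rightarrow> 'e set \<Rightarrow> 'a set \<Rightarrow> 'a set set" where
  "comps en F S = (\<lambda>u. {v\<in>S. conn en F u v}) ` S"

definition acyc :: "('e \<Rightarrow> 'a set) \<Rightarrow> 'e set \<Rightarrow> bool" where
  "acyc en F \<longleftrightarrow> (\<forall>f\<in>F. \<forall>u v. en f = {u,v} \<longrightarrow> \<not> conn en (F-{f}) u v)"

lemma conn_cong_l: "conn en F x a \<Longrightarrow> conn en F x v \<longleftrightarrow> conn en F a v"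
proof
  assume "conn en F x a" "conn en F x v"
  then show "conn en F a v" using conn_trans[OF conn_sym[OF \<open>conn en F x a\<close>]] by simp
next
  assume "conn en F x a" "conn en F a v"
  then show "conn en F x v" by (rule conn_trans)
qed

lemma cls_eq: "conn en F x y \<Longrightarrow> {v\<in>S. conn en F x v} = {v\<in>S. conn en F y v}"
  using conn_cong_l[of en F x y] by simp

lemma comps_merge:
  assumes "finite S" "en f = {a,b}" "a \<in> S" "b \<in> S" "\<not> conn en F a b"
  shows "card (comps en (insert f F) S) + 1 = card (comps en F S)"
proof -
  define cls where "cls u = {v\<in>S. conn en F u v}" for u
  define A where "A = cls a"
  define B where "B = cls b"
  have ci: "\<And>x y. conn en (insert f F) x y \<longleftrightarrow> conn en F x y \<or> (conn en F x a \<and> conn en F b y) \<or> (conn en F x b \<and> conn en F a y)"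
    using conn_insert[of en f a b, OF assms(2)] by blast
  have c1: "{v\<in>S. conn en (insert f F) x v} = A \<union> B" if "conn en F x a" for x
  proof -
    have cc: "\<And>v. conn en F x v \<longleftrightarrow> conn en F a v" using that conn_cong_l by metis
    have nb: "\<not> conn en F x b" using assms(5) conn_sym[of en F a b] cc by auto
    have "conn en (insert f F) x v \<longleftrightarrow> conn en F a v \<or> conn en F b v" for v
      using ci[of x v] cc[of v] that nb by blast
    then show ?thesis unfolding A_def B_def cls_def by auto
  qed
  have c2: "{v\<in>S. conn en (insert f F) x v} = A \<union> B" if "conn en F x b" for x
  proof -
    have cc: "\<And>v. conn en F x v \<longleftrightarrow> conn en F b v" using that conn_cong_l by metis
    have na: "\<not> conn en F x a" using assms(5) conn_sym[of en F b a] cc by auto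
    have "conn en (insert f F) x v \<longleftrightarrow> conn en F a v \<or> conn en F b v" for v
      using ci[of x v] cc[of v] that na by blast
    then show ?thesis unfolding A_def B_def cls_def by auto
  qed
  have c3: "{v\<in>S. conn en (insert f F) x v} = cls x" if "\<not> conn en F x a" "\<not> conn en F x b" for x
  proof -
    have "conn en (insert f F) x v \<longleftrightarrow> conn en F x v" for v using ci[of x v] that by blast
    then show ?thesis unfolding cls_def by simp
  qed
  have c4: "cls x \<noteq> A \<and> cls x \<noteq> B" if "x \<in> S" "\<not> conn en F x a" "\<not> conn en F x b" for x
  proof -
    have "x \<in> cls x" using that unfolding cls_def by simp
    moreover have "x \<notin> A" "x \<notin> B" using that conn_sym[of en F a x] conn_sym[of en F b x] unfolding A_def B_def cls_def by auto
    ultimately show ?thesis by auto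
  qed
  have cF: "comps en F S = cls ` S" unfolding comps_def cls_def by simp
  have AB: "A \<in> comps en F S" "B \<in> comps en F S" "A \<noteq> B"
  proof -
    show "A \<in> comps en F S" "B \<in> comps en F S" unfolding cF A_def B_def using assms by auto
    have "b \<in> B" "b \<notin> A" using assms unfolding A_def B_def cls_def by auto
    then show "A \<noteq> B" by auto
  qed
  have eq: "comps en (insert f F) S = insert (A \<union> B) (comps en F S - {A,B})"
  proof
    show "comps en (insert f F) S \<subseteq> insert (A \<union> B) (comps en F S - {A,B})"
    proof
      fix C assume "C \<in> comps en (insert f F) S"
      then obtain x where x: "x \<in> S" "C = {v\<in>S. conn en (insert f F) x v}" unfolding comps_def by auto
      show "C \<in> insert (A \<union> B) (comps en F S - {A,B})"
      proof (cases "conn en F x a \<or> conn en F x b")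
        case True
        then have "C = A \<union> B" using c1[of x] c2[of x] x(2) by blast
        then show ?thesis by simp
      next
        case False
        then have "C = cls x" using c3[of x] x(2) by simp
        moreover have "cls x \<in> comps en F S" using cF x(1) by simp
        moreover have "cls x \<noteq> A \<and> cls x \<noteq> B" using c4[of x] False x(1) by simp
        ultimately show ?thesis by simp
      qed
    qed
  next
    show "insert (A \<union> B) (comps en F S - {A,B}) \<subseteq> comps en (insert f F) S"
    proof
      fix C assume C: "C \<in> insert (A \<union> B) (comps en F S - {A,B})"
      show "C \<in> comps en (insert f F) S"
      proof (cases "C = A \<union> B")
        case True
        have "{v\<in>S. conn en (insert f F) a v} \<in> comps en (insert f F) S" unfolding comps_def using assms(3) by blast
        moreover have "{v\<in>S. conn en (insert f F) a v} = A \<union> B" using c1[of a] by simp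
        ultimately show ?thesis using True by simp
      next
        case False
        then obtain x where x: "x \<in> S" "C = cls x" "C \<noteq> A" "C \<noteq> B" using C cF by auto
        have "\<not> conn en F x a"
        proof
          assume "conn en F x a"
          then have "cls x = A" unfolding A_def cls_def by (rule cls_eq)
          with x show False by simp
        qed
        moreover have "\<not> conn en F x b"
        proof
          assume "conn en F x b"
          then have "cls x = B" unfolding B_def cls_def by (rule cls_eq)
          with x show False by simp
        qed
        ultimately have "C = {v\<in>S. conn en (insert f F) x v}" using c3[of x] x(2) by simp
        moreover have "{v\<in>S. conn en (insert f F) x v} \<in> comps en (insert f F) S" unfolding comps_def using x(1) by blast
        ultimately show ?thesis by simp
      qed
    qed
  qed
  have nin: "A \<union> B \<notin> comps en F S - {A,B}"
  proof
    assume "A \<union> B \<in> comps en F S - {A,B}"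
    then obtain x where x: "x \<in> S" "A \<union> B = cls x" "cls x \<noteq> A" using cF by auto
    have "a \<in> A" using assms unfolding A_def cls_def by auto
    then have "conn en F x a" using x unfolding cls_def by auto
    then have "cls x = A" unfolding A_def cls_def by (rule cls_eq)
    then show False using x by simp
  qed
  have fin: "finite (comps en F S)" unfolding comps_def using assms(1) by simp
  have "card (comps en (insert f F) S) = card (comps en F S - {A,B}) + 1"
    unfolding eq using nin fin by simp
  also have "card (comps en F S - {A,B}) = card (comps en F S) - 2"
    using AB fin by (simp add: card_Diff_subset)
  moreover have "card {A,B} \<le> card (comps en F S)" using AB fin by (intro card_mono) auto
  moreover have "card {A,B} = 2" using AB by simp
  ultimately show ?thesis by linarith
qed


lemma comps_empty: "card (comps en {} S) = card S"
proof -
  have "comps en {} S = (\<lambda>u. {u}) ` S" unfolding comps_def conn_empty by auto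
  then show ?thesis by (simp add: card_image)
qed

lemma acyc_mono: "acyc en T \<Longrightarrow> F \<subseteq> T \<Longrightarrow> acyc en F"
  unfolding acyc_def
proof (intro ballI allI impI notI)
  fix f u v assume a: "\<forall>f\<in>T. \<forall>u v. en f = {u, v} \<longrightarrow> \<not> conn en (T - {f}) u v" "F \<subseteq> T" "f \<in> F" "en f = {u,v}" "conn en (F - {f}) u v"
  have "conn en (T - {f}) u v" using conn_mono[of "F-{f}" "T-{f}" en u v] a(2,5) by blast
  then show False using a by blast
qed

lemma count:
  assumes "finite F" "finite S" "\<forall>f\<in>F. en f \<subseteq> S" "\<forall>f\<in>F. \<exists>u v. en f = {u,v}"
  shows "card S \<le> card F + card (comps en F S) \<and> (acyc en F \<longrightarrow> card S = card F + card (comps en F S))"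
  using assms
proof (induction F rule: finite_induct)
  case empty then show ?case by (simp add: comps_empty)
next
  case (insert f F)
  obtain a b where ab: "en f = {a,b}" using insert.prems by auto
  have abS: "a \<in> S" "b \<in> S" using ab insert.prems by auto
  have IH: "card S \<le> card F + card (comps en F S) \<and> (acyc en F \<longrightarrow> card S = card F + card (comps en F S))"
    using insert by auto
  have cardI: "card (insert f F) = card F + 1" using insert by simp
  show ?case
  proof (cases "conn en F a b")
    case True
    have ba: "conn en F b a" using True by (rule conn_sym)
    have "conn en (insert f F) x y \<longleftrightarrow> conn en F x y" for x y
    proof -
      have "conn en F x a \<and> conn en F b y \<Longrightarrow> conn en F x y"
        by (meson True conn_trans)
      moreover have "conn en F x b \<and> conn en F a y \<Longrightarrow> conn en F x y"
        by (meson ba conn_trans)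
      ultimately show ?thesis using conn_insert[of en f a b F x y, OF ab] by blast
    qed
    then have "comps en (insert f F) S = comps en F S" unfolding comps_def by simp
    moreover have "\<not> acyc en (insert f F)"
    proof
      assume "acyc en (insert f F)"
      then have "\<not> conn en (insert f F - {f}) a b" unfolding acyc_def using ab by blast
      moreover have "insert f F - {f} = F" using insert.hyps(2) by simp
      ultimately show False using True by simp
    qed
    ultimately show ?thesis using IH cardI by simp
  next
    case False
    have m: "card (comps en (insert f F) S) + 1 = card (comps en F S)"
      using comps_merge[OF insert.prems(1) ab abS False] .
    have "acyc en F" if "acyc en (insert f F)" using acyc_mono that by blast
    then show ?thesis using IH cardI m by auto
  qed
qed

lemma comps_ne: "S \<noteq> {} \<Longrightarrow> card (comps en F S) \<ge> 1" if "finite S"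
  using that unfolding comps_def by (simp add: Suc_leI card_gt_0_iff)

lemma forest_bound:
  assumes "finite F" "finite S" "\<forall>f\<in>F. en f \<subseteq> S" "\<forall>f\<in>F. \<exists>u v. en f = {u,v}" "acyc en F" "S \<noteq> {}"
  shows "card F + 1 \<le> card S"
  using count[OF assms(1-4)] comps_ne[OF assms(2,6)] assms(5) by simp

lemma forest_conn:
  assumes "finite F" "finite S" "\<forall>f\<in>F. en f \<subseteq> S" "\<forall>f\<in>F. \<exists>u v. en f = {u,v}" "acyc en F"
    "card S \<le> card F + 1" "u \<in> S" "v \<in> S"
  shows "conn en F u v"
proof -
  have ne: "S \<noteq> {}" using assms(7) by auto
  have e: "card S = card F + card (comps en F S)" using count[OF assms(1-4)] assms(5) by blast
  have c: "card (comps en F S) = 1"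
    using e comps_ne[OF assms(2) ne, of en F] assms(6) by linarith
  then obtain C where C: "comps en F S = {C}" using card_1_singletonE by blast
  have "{w\<in>S. conn en F u w} \<in> comps en F S" unfolding comps_def using assms(7) by blast
  then have 1: "{w\<in>S. conn en F u w} = C" using C by simp
  have "{w\<in>S. conn en F v w} \<in> comps en F S" unfolding comps_def using assms(8) by blast
  then have 2: "{w\<in>S. conn en F v w} = C" using C by simp
  have "v \<in> {w\<in>S. conn en F v w}" using assms(8) by simp
  then have "v \<in> {w\<in>S. conn en F u w}" using 1 2 by simp
  then show ?thesis by simp
qed

lemma conn_bound:
  assumes "finite F" "finite S" "\<forall>f\<in>F. en f \<subseteq> S" "\<forall>f\<in>F. \<exists>u v. en f = {u,v}"
    "a \<in> S" "\<forall>v\<in>S. conn en F a v"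
  shows "card S \<le> card F + 1"
proof -
  have "comps en F S = {{w\<in>S. conn en F a w}}"
  proof -
    have "(\<lambda>u. {w\<in>S. conn en F u w}) ` S = (\<lambda>u. {w\<in>S. conn en F a w}) ` S"
    proof (rule image_cong[OF refl])
      fix u assume "u \<in> S"
      then have "conn en F a u" using assms(6) by blast
      then have "conn en F u a" by (rule conn_sym)
      then show "{w\<in>S. conn en F u w} = {w\<in>S. conn en F a w}" by (rule cls_eq)
    qed
    also have "\<dots> = {{w\<in>S. conn en F a w}}" using assms(5) by blast
    finally show ?thesis unfolding comps_def .
  qed
  then show ?thesis using count[OF assms(1-4)] by simp
qed


lemma conn_transfer:
  assumes "\<forall>g\<in>F1. \<forall>u v. en g = {u,v} \<longrightarrow> conn en F2 u v" "conn en F1 x y"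
  shows "conn en F2 x y"
  using assms(2) unfolding conn_def[of en F1]
proof (induction rule: rtrancl_induct)
  case base then show ?case by simp
next
  case (step y z)
  then obtain g where "g \<in> F1" "en g = {y,z}" unfolding adj_rel_def by auto
  then have "conn en F2 y z" using assms(1) by blast
  then show ?case using step.IH by (rule conn_trans[rotated])
qed

lemma conn_restrict:
  assumes "conn en F a v"
  shows "conn en {g\<in>F. en g \<subseteq> {w. conn en F a w}} a v"
proof -
  from assms have "(a,v) \<in> (adj_rel en F)\<^sup>*" unfolding conn_def .
  then show ?thesis
proof (induction rule: rtrancl_induct)
  case base then show ?case by simp
next
  case (step y z)
  then obtain g where g: "g \<in> F" "en g = {y,z}" unfolding adj_rel_def by auto
  have ay: "conn en F a y" using step.hyps(1) unfolding conn_def .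
  have "conn en F y z" using g by (rule conn_edge)
  then have az: "conn en F a z" using ay by (rule conn_trans[rotated])
  have "g \<in> {g\<in>F. en g \<subseteq> {w. conn en F a w}}" using g ay az by auto
  then have "conn en {g\<in>F. en g \<subseteq> {w. conn en F a w}} y z" using g(2) by (rule conn_edge)
  then show ?case using step.IH by (rule conn_trans[rotated])
qed
qed

lemma two_step_induct:
  assumes "P 0" "P (Suc 0)" "\<And>k. P (Suc k) \<Longrightarrow> P (Suc (Suc k))"
  shows "P n"
proof -
  have "P n \<and> P (Suc n)" by (induction n) (use assms in auto)
  then show ?thesis by simp
qed

lemma step_sub: "step_del en Es red i D \<subseteq> Es - D"
  unfolding step_del_def Let_def by auto

lemma D_sub: "ea \<in> Es \<Longrightarrow> deleted en Es red ea n \<subseteq> Es"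
proof (induction n rule: two_step_induct)
  case (3 k)
  then show ?case using step_sub[of en Es red "Suc (Suc k)" "deleted en Es red ea (Suc k)"] by auto
qed auto

lemma D_None: "n \<ge> 1 \<Longrightarrow> ea \<in> deleted en Es red ea n"
proof (induction n rule: two_step_induct)
  case (3 k) then show ?case by simp
qed auto

lemma D_step: "j \<ge> 2 \<Longrightarrow> deleted en Es red ea j = deleted en Es red ea (j-1) \<union> step_del en Es red j (deleted en Es red ea (j-1))"
proof -
  assume "j \<ge> 2"
  then obtain k where "j = Suc (Suc k)" by (metis add_2_eq_Suc le_Suc_ex)
  then show ?thesis by simp
qed

lemma terminates:
  assumes "finite Es" "ea \<in> Es"
  shows "\<exists>j\<ge>2. step_del en Es red j (deleted en Es red ea (j-1)) = {}"
proof (rule ccontr)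
  assume "\<not> ?thesis"
  then have ne: "\<And>j. j \<ge> 2 \<Longrightarrow> step_del en Es red j (deleted en Es red ea (j-1)) \<noteq> {}" by auto
  have "card (deleted en Es red ea (Suc n)) \<ge> Suc n" for n
  proof (induction n)
    case 0 then show ?case by simp
  next
    case (Suc n)
    let ?D = "deleted en Es red ea (Suc n)"
    let ?s = "step_del en Es red (Suc (Suc n)) ?D"
    have eq: "deleted en Es red ea (Suc (Suc n)) = ?D \<union> ?s" by simp
    have fD: "finite ?D" using D_sub[OF assms(2)] assms(1) finite_subset by metis
    have fs: "finite ?s" using step_sub assms(1) finite_subset by (metis Diff_subset subset_trans)
    have dj: "?D \<inter> ?s = {}" using step_sub[of en Es red "Suc (Suc n)" ?D] by blast
    have "?s \<noteq> {}" using ne[of "Suc (Suc n)"] by simp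
    then have "card ?s \<ge> 1" using fs by (simp add: Suc_leI card_gt_0_iff)
    then show ?case using eq card_Un_disjoint[OF fD fs dj] Suc.IH by simp
  qed
  moreover have "card (deleted en Es red ea (Suc n)) \<le> card Es" for n
    using D_sub[OF assms(2)] assms(1) by (rule card_mono[rotated])
  ultimately have "Suc (card Es) \<le> card Es" by (meson le_trans)
  then show False by simp
qed


lemma not_step:
  assumes "g \<notin> step_del en Es red i D" "g \<in> Es" "g \<notin> D" "red g = even i" "en g = {u,v}"
  shows "conn en {h\<in>Es - D. red h \<noteq> even i} u v"
proof -
  let ?F = "{h\<in>Es - D. red h \<noteq> even i}"
  from assms(1-4) have "\<not> (\<forall>u v. en g = {u,v} \<longrightarrow> \<not> conn en ?F u v)"
    unfolding step_del_def Let_def by auto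
  then obtain u' v' where uv: "en g = {u',v'}" "conn en ?F u' v'" by blast
  then have "{u,v} = {u',v'}" using assms(5) by simp
  then have "(u = u' \<and> v = v') \<or> (u = v' \<and> v = u')" by (auto simp: doubleton_eq_iff)
  then show ?thesis
  proof
    assume "u = u' \<and> v = v'" then show ?thesis using uv(2) by simp
  next
    assume "u = v' \<and> v = u'" then show ?thesis using conn_sym[OF uv(2)] by simp
  qed
qed

lemma step_red: "h \<in> step_del en Es red i D \<Longrightarrow> red h = even i"
  unfolding step_del_def Let_def by auto

lemma main_lemma:
  fixes V :: "'a set" and E :: "'a set set" and e :: "'a set"
    and red :: "'a set option \<Rightarrow> bool" and en :: "'a set option \<Rightarrow> 'a set"
  assumes enN: "en None = e" and enS: "\<And>y. en (Some y) = y"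
    and sg: "simple_graph V E"
    and cV: "card V \<ge> 2"
    and cE: "card E = 2 * card V - 3"
    and eE: "e \<in> E"
    and stR: "spanning_tree V en {x \<in> insert None (Some ` E). red x}"
    and stB: "spanning_tree V en {x \<in> insert None (Some ` E). \<not> red x}"
    and nr: "\<not> red None"
  shows "laman V E \<longleftrightarrow> all_deleted_at_termination en (insert None (Some ` E)) red None"
proof -
  define Es where "Es = insert None (Some ` E)"
  have finV: "finite V" using sg unfolding simple_graph_def by auto
  have EV: "\<forall>x\<in>E. \<exists>u v. u\<in>V \<and> v\<in>V \<and> u\<noteq>v \<and> x = {u,v}" using sg unfolding simple_graph_def by blast
  have "E \<subseteq> Pow V"
  proof
    fix x assume "x \<in> E"
    then obtain u v where "u \<in> V" "v \<in> V" "x = {u,v}" using EV by blast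
    then show "x \<in> Pow V" by simp
  qed
  then have finE: "finite E" using finV by (meson finite_Pow_iff finite_subset)
  have finEs: "finite Es" unfolding Es_def using finE by simp
  have NoneEs: "None \<in> Es" unfolding Es_def by simp
  have form: "\<exists>u v. u\<in>V \<and> v\<in>V \<and> u\<noteq>v \<and> en x = {u,v}" if "x \<in> Es" for x
  proof (cases x)
    case None then show ?thesis using EV eE enN by auto
  next
    case (Some y) then have "y \<in> E" using that unfolding Es_def by auto
    then show ?thesis using EV enS Some by auto
  qed
  have form2: "\<forall>f\<in>F. \<exists>u v. en f = {u,v}" if "F \<subseteq> Es" for F
    using form that by blast
  have inV: "en x \<subseteq> V" if "x \<in> Es" for x using form[OF that] by auto
  have acR: "acyc en {x\<in>Es. red x}" using stR unfolding spanning_tree_def acyc_def Es_def by blast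
  have acB: "acyc en {x\<in>Es. \<not> red x}" using stB unfolding spanning_tree_def acyc_def Es_def by blast
  have cR: "\<forall>u\<in>V. \<forall>v\<in>V. conn en {x\<in>Es. red x} u v" using stR unfolding spanning_tree_def Es_def by blast
  show ?thesis unfolding Es_def[symmetric]
  proof
    assume lam: "laman V E"
    let ?D = "\<lambda>j. deleted en Es red None j"
    let ?s = "\<lambda>j. step_del en Es red j (?D (j-1))"
    have ex: "\<exists>j. 2 \<le> j \<and> ?s j = {}" using terminates[OF finEs NoneEs] by auto
    define k where "k = (LEAST j. 2 \<le> j \<and> ?s j = {})"
    have kP: "2 \<le> k \<and> ?s k = {}" unfolding k_def using ex by (rule LeastI_ex)
    have kmin: "?s j \<noteq> {}" if "2 \<le> j" "j < k" for j
      using not_less_Least[of j "\<lambda>j. 2 \<le> j \<and> ?s j = {}"] that unfolding k_def by blast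
    have Dk: "?D k = ?D (k-1)" using D_step[of k en Es red None] kP by simp
    have NoneD: "None \<in> ?D k" using D_None[of k] kP by simp
    have allD: "?D k = Es"
    proof (rule ccontr)
      assume "?D k \<noteq> Es"
      then obtain x where x: "x \<in> Es" "x \<notin> ?D k" using D_sub[OF NoneEs, of en red k] by blast
      define U where "U = Es - ?D k"
      have fin: "conn en {h\<in>U. red h \<noteq> red g} u v" if g: "g \<in> U" "en g = {u,v}" for g u v
      proof (cases "red g = even k")
        case True
        have "g \<notin> ?s k" using kP by simp
        then have "conn en {h\<in>Es - ?D (k-1). red h \<noteq> even k} u v"
          using not_step[of g en Es red k "?D (k-1)" u v] g True Dk unfolding U_def by auto
        moreover have "{h\<in>Es - ?D (k-1). red h \<noteq> even k} = {h\<in>U. red h \<noteq> red g}"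
          unfolding U_def using Dk True by auto
        ultimately show ?thesis by simp
      next
        case False
        show ?thesis
        proof (cases "k = 2")
          case True
          have "?D 2 = {None}" using kP True by (simp add: numeral_2_eq_2)
          then have "{h\<in>U. red h \<noteq> red g} = {x\<in>Es. red x}"
            unfolding U_def using True False nr by auto
          moreover have "u \<in> V" "v \<in> V" using inV g unfolding U_def by auto
          ultimately show ?thesis using cR by simp
        next
          case k3: False
          then have k3': "k - 1 \<ge> 2" using kP by linarith
          have D1: "?D (k-1) = ?D (k-1-1) \<union> ?s (k-1)" using D_step[OF k3'] by simp
          have gD: "g \<notin> ?D (k-1-1)" "g \<notin> ?s (k-1)" "g \<in> Es" using g Dk D1 unfolding U_def by auto
          have ev: "red g = even (k-1)" using False kP by auto
          have c: "conn en {h\<in>Es - ?D (k-1-1). red h \<noteq> even (k-1)} u v"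
            using not_step[of g en Es red "k-1" "?D (k-1-1)" u v] gD ev g(2) by blast
          have "{h\<in>Es - ?D (k-1-1). red h \<noteq> even (k-1)} \<subseteq> {h\<in>U. red h \<noteq> red g}"
          proof
            fix h assume h: "h \<in> {h\<in>Es - ?D (k-1-1). red h \<noteq> even (k-1)}"
            then have "h \<notin> ?s (k-1)" using step_red[of h en Es red "k-1"] by auto
            then show "h \<in> {h\<in>U. red h \<noteq> red g}" using h D1 Dk ev unfolding U_def by auto
          qed
          then show ?thesis using c by (rule conn_mono)
        qed
      qed
      define R' where "R' = {h\<in>U. red h}"
      define B' where "B' = {h\<in>U. \<not> red h}"
      have RB: "conn en B' p q" if "conn en R' p q" for p q
      proof (rule conn_transfer[OF _ that], intro ballI allI impI)
        fix g u v assume "g \<in> R'" "en g = {u,v}"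
        moreover have "{h\<in>U. red h \<noteq> red g} = B'" using \<open>g \<in> R'\<close> unfolding R'_def B'_def by auto
        ultimately show "conn en B' u v" using fin unfolding R'_def by force
      qed
      have BR: "conn en R' p q" if "conn en B' p q" for p q
      proof (rule conn_transfer[OF _ that], intro ballI allI impI)
        fix g u v assume "g \<in> B'" "en g = {u,v}"
        moreover have "{h\<in>U. red h \<noteq> red g} = R'" using \<open>g \<in> B'\<close> unfolding R'_def B'_def by auto
        ultimately show "conn en R' u v" using fin unfolding B'_def by force
      qed
      obtain a b where ab: "a \<in> V" "b \<in> V" "a \<noteq> b" "en x = {a,b}" using form[OF x(1)] by blast
      have xU: "x \<in> U" unfolding U_def using x by simp
      have cab: "conn en R' a b"
      proof (cases "red x")
        case True
        then have "x \<in> R'" unfolding R'_def using xU by simp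
        then show ?thesis using ab(4) by (rule conn_edge)
      next
        case False
        then have "{h\<in>U. red h \<noteq> red x} = R'" unfolding R'_def by auto
        then show ?thesis using fin[OF xU ab(4)] by simp
      qed
      define P where "P = {w. conn en R' a w}"
      have PB: "{w. conn en B' a w} = P" unfolding P_def using RB BR by blast
      have R'Es: "R' \<subseteq> Es" "B' \<subseteq> Es" unfolding R'_def B'_def U_def by auto
      have PV: "P \<subseteq> V"
      proof
        fix w assume "w \<in> P"
        then have "conn en R' a w" unfolding P_def by simp
        moreover have "\<forall>f\<in>R'. en f \<subseteq> V" using R'Es inV by blast
        ultimately show "w \<in> V" using conn_inside ab(1) by metis
      qed
      have finP: "finite P" using PV finV finite_subset by blast
      define FR where "FR = {g\<in>R'. en g \<subseteq> P}"
      define FB where "FB = {g\<in>B'. en g \<subseteq> P}"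
      have aP: "a \<in> P" unfolding P_def by simp
      have bP: "b \<in> P" unfolding P_def using cab by simp
      have FREs: "FR \<subseteq> Es" "FB \<subseteq> Es" using R'Es unfolding FR_def FB_def by auto
      have finFR: "finite FR" "finite FB" using FREs finEs finite_subset by auto
      have bR: "card P \<le> card FR + 1"
      proof (rule conn_bound[OF finFR(1) finP _ form2[OF FREs(1)] aP])
        show "\<forall>f\<in>FR. en f \<subseteq> P" unfolding FR_def by auto
        show "\<forall>v\<in>P. conn en FR a v"
        proof
          fix v assume "v \<in> P"
          then have "conn en R' a v" unfolding P_def by simp
          then have "conn en {g\<in>R'. en g \<subseteq> {w. conn en R' a w}} a v" by (rule conn_restrict)
          then show "conn en FR a v" unfolding FR_def P_def .
        qed
      qed
      have bB: "card P \<le> card FB + 1"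
      proof (rule conn_bound[OF finFR(2) finP _ form2[OF FREs(2)] aP])
        show "\<forall>f\<in>FB. en f \<subseteq> P" unfolding FB_def by auto
        show "\<forall>v\<in>P. conn en FB a v"
        proof
          fix v assume "v \<in> P"
          then have "conn en B' a v" using PB by blast
          then have "conn en {g\<in>B'. en g \<subseteq> {w. conn en B' a w}} a v" by (rule conn_restrict)
          then show "conn en FB a v" unfolding FB_def PB .
        qed
      qed
      have NU: "None \<notin> U" unfolding U_def using NoneD by simp
      have sub: "FR \<union> FB \<subseteq> Some ` {y\<in>E. y \<subseteq> P}"
      proof
        fix g assume g: "g \<in> FR \<union> FB"
        then have "g \<in> U" "en g \<subseteq> P" unfolding FR_def FB_def R'_def B'_def by auto
        then obtain y where "g = Some y" "y \<in> E" "y \<subseteq> P" using NU enS unfolding U_def Es_def by auto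
        then show "g \<in> Some ` {y\<in>E. y \<subseteq> P}" by blast
      qed
      have "card (FR \<union> FB) = card FR + card FB"
        by (rule card_Un_disjoint[OF finFR]) (auto simp: FR_def FB_def R'_def B'_def)
      moreover have "card (FR \<union> FB) \<le> card (Some ` {y\<in>E. y \<subseteq> P})"
        by (rule card_mono[OF _ sub]) (use finE in simp)
      moreover have "card (Some ` {y\<in>E. y \<subseteq> P}) = card {y\<in>E. y \<subseteq> P}"
        by (rule card_image) (simp add: inj_on_def)
      moreover have "card P \<ge> 2"
      proof -
        have "card {a,b} \<le> card P" using aP bP finP by (intro card_mono) auto
        then show ?thesis using ab(3) by simp
      qed
      moreover have "card {y\<in>E. y \<subseteq> P} \<le> 2 * card P - 3" using lam PV \<open>card P \<ge> 2\<close> unfolding laman_def by blast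
      ultimately show False using bR bB by linarith
    qed
    show "all_deleted_at_termination en Es red None"
      unfolding all_deleted_at_termination_def
    proof (rule exI[of _ k], intro conjI)
      show "2 \<le> k" using kP by simp
      show "?s k = {}" using kP by simp
      show "\<forall>j. 2 \<le> j \<and> j < k \<longrightarrow> ?s j \<noteq> {}" using kmin by blast
      show "?D k = Es" by (rule allD)
    qed
  next
    assume ad: "all_deleted_at_termination en Es red None"
    then obtain k where kD: "deleted en Es red None k = Es" unfolding all_deleted_at_termination_def by blast
    show "laman V E"
    proof (rule ccontr)
      assume nl: "\<not> laman V E"
      then obtain S where S: "S \<subseteq> V" "card S \<ge> 2" "\<not> card {x\<in>E. x \<subseteq> S} \<le> 2 * card S - 3"
        using cE unfolding laman_def by blast
      define ES where "ES = {x\<in>E. x \<subseteq> S}"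
      define IS where "IS = {x\<in>Es. en x \<subseteq> S}"
      define RS where "RS = {x\<in>IS. red x}"
      define BS where "BS = {x\<in>IS. \<not> red x}"
      have finS: "finite S" using S(1) finV finite_subset by blast
      have Sne: "S \<noteq> {}" using S(2) by auto
      have cES: "card ES \<ge> 2 * card S - 2" using S(2,3) unfolding ES_def by linarith
      have ISEs: "IS \<subseteq> Es" "RS \<subseteq> Es" "BS \<subseteq> Es" unfolding IS_def RS_def BS_def by auto
      have finIS: "finite IS" "finite RS" "finite BS" using finite_subset[OF ISEs(1) finEs] finite_subset[OF ISEs(2) finEs] finite_subset[OF ISEs(3) finEs] by blast+
      have hIS: "Some ` ES \<subseteq> IS" unfolding ES_def IS_def Es_def using enS by auto
      have cSome: "card (Some ` ES) = card ES" by (rule card_image) (simp add: inj_on_def)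
      have cIS: "card IS = card RS + card BS"
      proof -
        have "IS = RS \<union> BS" unfolding RS_def BS_def by auto
        moreover have "card (RS \<union> BS) = card RS + card BS"
          by (rule card_Un_disjoint[OF finIS(2,3)]) (auto simp: RS_def BS_def)
        ultimately show ?thesis by simp
      qed
      have inS: "\<forall>f\<in>RS. en f \<subseteq> S" "\<forall>f\<in>BS. en f \<subseteq> S" unfolding RS_def BS_def IS_def by auto
      have acRS: "acyc en RS" by (rule acyc_mono[OF acR]) (auto simp: RS_def IS_def)
      have acBS: "acyc en BS" by (rule acyc_mono[OF acB]) (auto simp: BS_def IS_def)
      have bRS: "card RS + 1 \<le> card S" using forest_bound[OF finIS(2) finS inS(1) form2[OF ISEs(2)] acRS Sne] .
      have bBS: "card BS + 1 \<le> card S" using forest_bound[OF finIS(3) finS inS(2) form2[OF ISEs(3)] acBS Sne] .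
      have "card ES \<le> card IS" using cSome card_mono[OF finIS(1) hIS] by simp
      then have geR: "card S \<le> card RS + 1" and geB: "card S \<le> card BS + 1" using cES cIS bRS bBS by linarith+
      have cRS: "conn en RS u v" if "u \<in> S" "v \<in> S" for u v
        using forest_conn[OF finIS(2) finS inS(1) form2[OF ISEs(2)] acRS geR that] .
      have cBS: "conn en BS u v" if "u \<in> S" "v \<in> S" for u v
        using forest_conn[OF finIS(3) finS inS(2) form2[OF ISEs(3)] acBS geB that] .
      have NIS: "None \<notin> IS"
      proof
        assume "None \<in> IS"
        then have "insert None (Some ` ES) \<subseteq> IS" using hIS by simp
        then have "card (insert None (Some ` ES)) \<le> card IS" using finIS(1) by (rule card_mono[rotated])
        moreover have "card (insert None (Some ` ES)) = card ES + 1"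
          using cSome finE unfolding ES_def by simp
        ultimately show False using cES cIS bRS bBS by linarith
      qed
      have inv: "deleted en Es red None n \<inter> IS = {}" for n
      proof (induction n rule: two_step_induct)
        case 1 then show ?case by simp
      next
        case 2 then show ?case using NIS by simp
      next
        case (3 j)
        let ?D = "deleted en Es red None (Suc j)"
        let ?i = "Suc (Suc j)"
        have "step_del en Es red ?i ?D \<inter> IS = {}"
        proof (rule ccontr)
          assume "step_del en Es red ?i ?D \<inter> IS \<noteq> {}"
          then obtain f where f: "f \<in> step_del en Es red ?i ?D" "f \<in> IS" by blast
          let ?F = "{g \<in> Es - ?D. red g \<noteq> even ?i}"
          have fp: "red f = even ?i" "\<forall>u v. en f = {u,v} \<longrightarrow> \<not> conn en ?F u v"
            using f(1) unfolding step_del_def Let_def by auto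
          obtain u v where uv: "en f = {u,v}"
          proof -
            have "f \<in> Es" using ISEs(1) f(2) by blast
            then show ?thesis using form[of f] that by blast
          qed
          have uvS: "u \<in> S" "v \<in> S" using f(2) uv unfolding IS_def by auto
          have "conn en ?F u v"
          proof (cases "red f")
            case True
            have "BS \<subseteq> ?F" using 3 True fp(1) unfolding BS_def IS_def by auto
            then show ?thesis using cBS[OF uvS] by (rule conn_mono)
          next
            case False
            have "RS \<subseteq> ?F" using 3 False fp(1) unfolding RS_def IS_def by auto
            then show ?thesis using cRS[OF uvS] by (rule conn_mono)
          qed
          then show False using fp(2) uv by blast
        qed
        then show ?case using 3 by auto
      qed
      have "card ES \<ge> 2" using cES S(2) by linarith
      then have "ES \<noteq> {}" by auto
      then obtain y where "y \<in> ES" by blast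
      then have "Some y \<in> IS" "Some y \<in> Es" using hIS ISEs by auto
      then show False using inv[of k] kD by auto
    qed
  qed
qed

theorem mainTheorem2:
  fixes V :: "'a set" and E :: "'a set set" and e :: "'a set"
    and red :: "'a set option \<Rightarrow> bool"
  assumes "simple_graph V E"
    and "card V \<ge> 2"
    and "card E = 2 * card V - 3"
    and "e \<in> E"
    and "spanning_tree V (\<lambda>x. case x of None \<Rightarrow> e | Some y \<Rightarrow> y)
           {x \<in> insert None (Some ` E). red x}"
    and "spanning_tree V (\<lambda>x. case x of None \<Rightarrow> e | Some y \<Rightarrow> y)
           {x \<in> insert None (Some ` E). \<not> red x}"
    and "\<not> red None"
  shows "laman V E \<longleftrightarrow>
    all_deleted_at_termination (\<lambda>x. case x of None \<Rightarrow> e | Some y \<Rightarrow> y)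
      (insert None (Some ` E)) red None"
  by (rule main_lemma) (use assms in simp_all)

end
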